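(* Let $T>0$, $0<\eta<T$ and $\alpha>\frac{1}{\eta}$. If $y\in C([0,T],[0,\infty))$, then the problem \[ u''(t)+y(t)=0,\quad t\in(0,T),\qquad u'(0)=0,\quad u(T)=\alpha\int_0^{\eta}u(s)\,ds \] has no positive solution.
   Context: A positive solution means a solution $u$ of the problem with $u(t)\ge 0$ for all $t\in[0,T]$ and $u$ not identically zero. *)

theory Defs
  imports "HOL-Analysis.Analysis"
begin

definition is_solution ::
  "real \<Rightarrow> real \<Rightarrow> real \<Rightarrow> (real \<Rightarrow> real) \<Rightarrow> (real \<Rightarrow> real) \<Rightarrow> bool" where
  "is_solution T \<eta> \<alpha> y u \<longleftrightarrow>
     (\<exists>u' u''.
        (\<forall>t\<in>{0..T}. (u has_real_derivative u' t) (at t within {0..T})) \<and>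
        continuous_on {0..T} u' \<and>
        (\<forall>t\<in>{0<..<T}. (u' has_real_derivative u'' t) (at t)) \<and>
        (\<forall>t\<in>{0<..<T}. u'' t + y t = 0) \<and>
        u' 0 = 0 \<and>
        u T = \<alpha> * integral {0..\<eta>} u)"

definition is_positive_solution ::
  "real \<Rightarrow> real \<Rightarrow> real \<Rightarrow> (real \<Rightarrow> real) \<Rightarrow> (real \<Rightarrow> real) \<Rightarrow> bool" where
  "is_positive_solution T \<eta> \<alpha> y u \<longleftrightarrow>
     is_solution T \<eta> \<alpha> y u \<and> (\<forall>t\<in>{0..T}. u t \<ge> 0) \<and> (\<exists>t\<in>{0..T}. u t \<noteq> 0)"

end

theory Submission
  imports Defs
begin

theorem lemma2p3:
  fixes T \<eta> \<alpha> :: real and y :: "real \<Rightarrow> real"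
  assumes "T > 0" and "0 < \<eta>" and "\<eta> < T" and "\<alpha> > 1 / \<eta>"
    and "continuous_on {0..T} y" and "\<forall>t\<in>{0..T}. y t \<ge> 0"
  shows "\<not> (\<exists>u. is_positive_solution T \<eta> \<alpha> y u)"
proof
  assume "\<exists>u. is_positive_solution T \<eta> \<alpha> y u"
  then obtain u u' u'' where
    d1: "\<forall>t\<in>{0..T}. (u has_real_derivative u' t) (at t within {0..T})" and
    c1: "continuous_on {0..T} u'" and
    d2: "\<forall>t\<in>{0<..<T}. (u' has_real_derivative u'' t) (at t)" and
    eq: "\<forall>t\<in>{0<..<T}. u'' t + y t = 0" and
    u0: "u' 0 = 0" and bc: "u T = \<alpha> * integral {0..\<eta>} u" and
    nn: "\<forall>t\<in>{0..T}. u t \<ge> 0" and nz: "\<exists>t\<in>{0..T}. u t \<noteq> 0"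
    unfolding is_positive_solution_def is_solution_def by blast
  have cu: "continuous_on {0..T} u"
    using d1 by (meson continuous_on_eq_continuous_within DERIV_continuous)
  have up: "u' t \<le> 0" if "t \<in> {0..T}" for t
  proof -
    have "u' 0 \<ge> u' t"
    proof (rule DERIV_nonpos_imp_decreasing_open[of 0 t u'])
      show "0 \<le> t" using that by auto
      show "\<exists>z. DERIV u' x :> z \<and> z \<le> 0" if "0 < x" "x < t" for x
      proof -
        have x: "x \<in> {0<..<T}" using that \<open>t \<in> {0..T}\<close> by auto
        have "u'' x = - y x" using eq x by (simp add: eq_neg_iff_add_eq_0)
        moreover have "y x \<ge> 0" using assms(6) x by auto
        moreover have "(u' has_real_derivative u'' x) (at x)" using d2 x by blast
        ultimately show ?thesis by (intro exI[of _ "u'' x"]) simp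
      qed
      show "continuous_on {0..t} u'" using c1 that by (auto intro: continuous_on_subset)
    qed
    thus ?thesis using u0 by simp
  qed
  have mono: "u b \<le> u a" if "0 \<le> a" "a \<le> b" "b \<le> T" for a b
  proof (rule DERIV_nonpos_imp_decreasing_open[of a b u])
    show "a \<le> b" by fact
    show "\<exists>z. DERIV u x :> z \<and> z \<le> 0" if "a < x" "x < b" for x
    proof -
      have "at x within {0..T} = at x" using that \<open>0 \<le> a\<close> \<open>b \<le> T\<close>
        by (intro at_within_Icc_at) auto
      moreover have x: "x \<in> {0..T}" using that \<open>0 \<le> a\<close> \<open>b \<le> T\<close> by auto
      ultimately have "(u has_real_derivative u' x) (at x)" using d1 by metis
      then show ?thesis using up x by blast
    qed
    show "continuous_on {a..b} u" using cu that by (auto intro: continuous_on_subset)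
  qed
  have cue: "continuous_on {0..\<eta>} u" using cu assms by (auto intro: continuous_on_subset)
  have int: "u integrable_on {0..\<eta>}" using cue integrable_continuous_real by blast
  have I1: "integral {0..\<eta>} u \<ge> \<eta> * u \<eta>"
  proof -
    have "integral {0..\<eta>} (\<lambda>_. u \<eta>) \<le> integral {0..\<eta>} u"
      by (rule integral_le) (use int mono assms in auto)
    thus ?thesis using assms by simp
  qed
  have uTe: "u T \<le> u \<eta>" using mono assms by auto
  have ae: "\<alpha> * \<eta> > 1" using assms by (simp add: field_simps)
  have apos: "\<alpha> > 0" using assms(2,4) by (smt (verit) divide_pos_pos)
  have "u T \<ge> \<alpha> * (\<eta> * u \<eta>)" using bc I1 apos by (simp add: mult_left_mono)
  moreover have "\<alpha> * (\<eta> * u \<eta>) \<ge> \<alpha> * (\<eta> * u T)"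
    using uTe apos assms(2) by (intro mult_left_mono) auto
  ultimately have h: "u T \<ge> (\<alpha> * \<eta>) * u T" by (simp add: mult.assoc)
  have uTn: "u T \<ge> 0" using nn assms(1) by auto
  have "(\<alpha> * \<eta> - 1) * u T \<le> 0" using h by (simp add: algebra_simps)
  moreover have "(\<alpha> * \<eta> - 1) * u T \<ge> 0" using ae uTn by simp
  ultimately have uT0: "u T = 0" using ae uTn by (simp add: mult_le_0_iff)
  hence "integral {0..\<eta>} u = 0" using bc apos by simp
  hence hi: "(u has_integral 0) (cbox 0 \<eta>)" using int by (metis cbox_interval has_integral_integral)
  have z1: "u t = 0" if "t \<in> {0..\<eta>}" for t
    by (rule has_integral_0_cbox_imp_0[OF _ _ hi]) (use cue nn assms that in auto)
  have "u t = 0" if "t \<in> {0..T}" for t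
  proof (cases "t \<le> \<eta>")
    case True thus ?thesis using z1 that by auto
  next
    case False
    then have "u t \<le> u \<eta>" using mono that assms by auto
    thus ?thesis using z1[of \<eta>] nn that assms by fastforce
  qed
  thus False using nz by blast
qed

end
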